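(* Let $G$ be a complete edge-colored graph. The following are equivalent: (i) $G$ is the graph representation of a symbolic ultrametric; (ii) $G$ does not contain a rainbow triangle and every monochromatic subgraph of $G$ is the simple permutation graph (for some labeling) of a separable permutation. Moreover, if $G$ is the graph representation of a symbolic ultrametric, then for every induced subgraph $H$ of $G$, every monochromatic subgraph of $H$ is the simple permutation graph of a separable permutation.
   Context: A complete edge-colored graph $G=(V,E_1,\dots,E_k)$ is a complete graph on finite $V$ with edges partitioned into nonempty color classes $E_i$; its monochromatic subgraphs are $G_{|i}=(V,E_i)$; induced subgraphs keep colors. A rainbow triangle is a set of three vertices whose three edges have pairwise distinct colors. A labeling is a bijection $\ell:V\to\{1,\dots,|V|\}$. A graph $(V,E)$ with labeling $\ell$ is a simple permutation graph of a permutation $\pi$ of $\{1,\dots,|V|\}$ if for all $u,v$ with $\ell(u)>\ell(v)$: $\{u,v\}\in E$ iff $\pi^{-1}(\ell(u))<\pi^{-1}(\ell(v))$. A permutation is separable if it contains neither of the patterns $2413$ and $3142$ (equivalently, it can be built from the one-element permutation by direct and skew sums). For a nonempty finite set $X$, a surjective map $\delta:X\times X\to\{1,\dots,k\}$ is a symbolic ultrametric if (U1) $\delta(x,y)=\delta(y,x)$; (U2) $|\{\delta(x,y),\delta(x,z),\delta(y,z)\}|\le2$ for all $x,y,z$; (U3) there is no 4-element subset $\{x,y,u,v\}$ with $\delta(x,y)=\delta(y,u)=\delta(u,v)\ne\delta(v,y)=\delta(x,v)=\delta(x,u)$. Its graph representation is the complete graph on $X$ with edge $\{x,y\}$ colored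 $\delta(x,y)$. *)

theory Defs
  imports "HOL-Combinatorics.Permutations"
begin

definition complete_edge_colored :: "'a set \<Rightarrow> ('a \<Rightarrow> 'a \<Rightarrow> nat) \<Rightarrow> nat \<Rightarrow> bool" where
  "complete_edge_colored V c k \<longleftrightarrow> finite V \<and>
     (\<forall>x\<in>V. \<forall>y\<in>V. x \<noteq> y \<longrightarrow> c x y = c y x \<and> c x y \<in> {1..k}) \<and>
     (\<forall>i\<in>{1..k}. \<exists>x\<in>V. \<exists>y\<in>V. x \<noteq> y \<and> c x y = i)"

definition mono_edge :: "('a \<Rightarrow> 'a \<Rightarrow> nat) \<Rightarrow> nat \<Rightarrow> 'a \<Rightarrow> 'a \<Rightarrow> bool" where
  "mono_edge c i x y \<longleftrightarrow> x \<noteq> y \<and> c x y = i"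

definition rainbow_triangle :: "'a set \<Rightarrow> ('a \<Rightarrow> 'a \<Rightarrow> nat) \<Rightarrow> 'a \<Rightarrow> 'a \<Rightarrow> 'a \<Rightarrow> bool" where
  "rainbow_triangle V c x y z \<longleftrightarrow> x \<in> V \<and> y \<in> V \<and> z \<in> V \<and> x \<noteq> y \<and> x \<noteq> z \<and> y \<noteq> z \<and>
     c x y \<noteq> c x z \<and> c x y \<noteq> c y z \<and> c x z \<noteq> c y z"

definition has_rainbow_triangle :: "'a set \<Rightarrow> ('a \<Rightarrow> 'a \<Rightarrow> nat) \<Rightarrow> bool" where
  "has_rainbow_triangle V c \<longleftrightarrow> (\<exists>x y z. rainbow_triangle V c x y z)"

definition contains_2413 :: "nat \<Rightarrow> (nat \<Rightarrow> nat) \<Rightarrow> bool" where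
  "contains_2413 n p \<longleftrightarrow> (\<exists>i1 i2 i3 i4. 1 \<le> i1 \<and> i1 < i2 \<and> i2 < i3 \<and> i3 < i4 \<and> i4 \<le> n \<and>
      p i3 < p i1 \<and> p i1 < p i4 \<and> p i4 < p i2)"

definition contains_3142 :: "nat \<Rightarrow> (nat \<Rightarrow> nat) \<Rightarrow> bool" where
  "contains_3142 n p \<longleftrightarrow> (\<exists>i1 i2 i3 i4. 1 \<le> i1 \<and> i1 < i2 \<and> i2 < i3 \<and> i3 < i4 \<and> i4 \<le> n \<and>
      p i2 < p i4 \<and> p i4 < p i1 \<and> p i1 < p i3)"

definition separable_perm :: "nat \<Rightarrow> (nat \<Rightarrow> nat) \<Rightarrow> bool" where
  "separable_perm n p \<longleftrightarrow> p permutes {1..n} \<and> \<not> contains_2413 n p \<and> \<not> contains_3142 n p"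

definition simple_perm_graph :: "'a set \<Rightarrow> ('a \<Rightarrow> 'a \<Rightarrow> bool) \<Rightarrow> ('a \<Rightarrow> nat) \<Rightarrow> (nat \<Rightarrow> nat) \<Rightarrow> bool" where
  "simple_perm_graph V E l p \<longleftrightarrow> bij_betw l V {1..card V} \<and> p permutes {1..card V} \<and>
     (\<forall>u\<in>V. \<forall>v\<in>V. l u > l v \<longrightarrow> (E u v \<longleftrightarrow> inv p (l u) < inv p (l v)))"

definition separable_perm_graph :: "'a set \<Rightarrow> ('a \<Rightarrow> 'a \<Rightarrow> bool) \<Rightarrow> bool" where
  "separable_perm_graph V E \<longleftrightarrow>
     (\<exists>l p. simple_perm_graph V E l p \<and> separable_perm (card V) p)"

definition symbolic_ultrametric :: "'a set \<Rightarrow> ('a \<Rightarrow> 'a \<Rightarrow> nat) \<Rightarrow> nat \<Rightarrow> bool" where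
  "symbolic_ultrametric X d m \<longleftrightarrow> finite X \<and> X \<noteq> {} \<and>
     (\<forall>x\<in>X. \<forall>y\<in>X. d x y \<in> {1..m}) \<and> (\<forall>i\<in>{1..m}. \<exists>x\<in>X. \<exists>y\<in>X. d x y = i) \<and>
     (\<forall>x\<in>X. \<forall>y\<in>X. d x y = d y x) \<and>
     (\<forall>x\<in>X. \<forall>y\<in>X. \<forall>z\<in>X. card {d x y, d x z, d y z} \<le> 2) \<and>
     \<not> (\<exists>x\<in>X. \<exists>y\<in>X. \<exists>u\<in>X. \<exists>v\<in>X. card {x, y, u, v} = 4 \<and>
          d x y = d y u \<and> d y u = d u v \<and> d u v \<noteq> d v y \<and> d v y = d x v \<and> d x v = d x u)"

definition is_su_graph_rep :: "'a set \<Rightarrow> ('a \<Rightarrow> 'a \<Rightarrow> nat) \<Rightarrow> bool" where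
  "is_su_graph_rep V c \<longleftrightarrow> (\<exists>d m. symbolic_ultrametric V d m \<and>
     (\<forall>x\<in>V. \<forall>y\<in>V. x \<noteq> y \<longrightarrow> d x y = c x y))"

definition colors_on :: "'a set \<Rightarrow> ('a \<Rightarrow> 'a \<Rightarrow> nat) \<Rightarrow> nat set" where
  "colors_on W c = {c x y | x y. x \<in> W \<and> y \<in> W \<and> x \<noteq> y}"

end

theory Submission
  imports Defs
begin


lemma p4_half:
  fixes L F :: "'a \<Rightarrow> nat"
  assumes "L a \<noteq> L b" "L a \<noteq> L c" "L a \<noteq> L d" "L b \<noteq> L c" "L b \<noteq> L d" "L c \<noteq> L d"
    "F a \<noteq> F b" "F a \<noteq> F c" "F a \<noteq> F d" "F b \<noteq> F c" "F b \<noteq> F d" "F c \<noteq> F d"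
    "(L a < L b) \<longleftrightarrow> (F b < F a)" "(L b < L c) \<longleftrightarrow> (F c < F b)" "(L c < L d) \<longleftrightarrow> (F d < F c)"
    "\<not> ((L a < L c) \<longleftrightarrow> (F c < F a))" "\<not> ((L b < L d) \<longleftrightarrow> (F d < F b))" "\<not> ((L a < L d) \<longleftrightarrow> (F d < F a))"
    and ab: "L a < L b"
  shows "(L a < L c \<and> L c < L b \<and> L b < L d \<and> F b < F a \<and> F a < F d \<and> F d < F c) \<or>
        (L c < L d \<and> L d < L a \<and> L a < L b \<and> F d < F b \<and> F b < F c \<and> F c < F a)"
proof (cases "L a < L c")
  case True
  have 1: "F b < F a" using assms(13) ab by simp
  have 2: "F a < F c" using assms(8,16) True by auto
  have 3: "L c < L b"
  proof (rule ccontr)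
    assume "\<not> L c < L b"
    then have "L b < L c" using assms(4) by auto
    then show False using assms(14) 1 2 by auto
  qed
  have 4: "L a < L d"
  proof (rule ccontr)
    assume "\<not> L a < L d"
    then have "L d < L a" using assms(3) by auto
    then have "F d < F a" "F c < F d" using assms(18,15,12) True by auto
    then show False using 2 by simp
  qed
  have 5: "F a < F d" using assms(18,9) 4 by auto
  have 6: "L b < L d"
  proof (rule ccontr)
    assume "\<not> L b < L d"
    then have "L d < L b" using assms(5) by auto
    then have "F d < F b" using assms(17) by auto
    then show False using 1 5 by simp
  qed
  have 7: "F d < F c" using assms(15) 3 6 by auto
  show ?thesis using True 1 3 5 6 7 by simp
next
  case False
  then have 0: "L c < L a" using assms(2) by auto
  have 1: "F b < F a" using assms(13) ab by simp
  have 2: "F c < F a" using assms(16) False by auto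
  have 3: "F b < F c" using assms(14,10) 0 ab by auto
  have 4: "L d < L a"
  proof (rule ccontr)
    assume "\<not> L d < L a"
    then have "L a < L d" using assms(3) by auto
    then have "F a < F d" "F d < F c" using assms(18,9,15) 0 by auto
    then show False using 2 by simp
  qed
  have 5: "F d < F a" using assms(18) 4 by auto
  have 6: "L c < L d"
  proof (rule ccontr)
    assume "\<not> L c < L d"
    then have "L d < L c" using assms(6) by auto
    then have "F c < F d" using assms(15,12) by auto
    have "L d < L b" using 4 ab by simp
    then have "F d < F b" using assms(17) by auto
    then show False using 3 \<open>F c < F d\<close> by simp
  qed
  have 7: "F d < F b" using assms(17) 6 4 ab by auto
  show ?thesis using 0 1 2 3 4 6 7 ab by simp
qed


lemma p4_core:
  fixes L F :: "'a \<Rightarrow> nat"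
  assumes "L a \<noteq> L b" "L a \<noteq> L c" "L a \<noteq> L d" "L b \<noteq> L c" "L b \<noteq> L d" "L c \<noteq> L d"
    "F a \<noteq> F b" "F a \<noteq> F c" "F a \<noteq> F d" "F b \<noteq> F c" "F b \<noteq> F d" "F c \<noteq> F d"
    "(L a < L b) \<longleftrightarrow> (F b < F a)" "(L b < L c) \<longleftrightarrow> (F c < F b)" "(L c < L d) \<longleftrightarrow> (F d < F c)"
    "\<not> ((L a < L c) \<longleftrightarrow> (F c < F a))" "\<not> ((L b < L d) \<longleftrightarrow> (F d < F b))" "\<not> ((L a < L d) \<longleftrightarrow> (F d < F a))"
  shows "\<exists>w1 w2 w3 w4. w1 \<in> {a,b,c,d} \<and> w2 \<in> {a,b,c,d} \<and> w3 \<in> {a,b,c,d} \<and> w4 \<in> {a,b,c,d} \<and>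
     L w1 < L w2 \<and> L w2 < L w3 \<and> L w3 < L w4 \<and>
     ((F w3 < F w1 \<and> F w1 < F w4 \<and> F w4 < F w2) \<or> (F w2 < F w4 \<and> F w4 < F w1 \<and> F w1 < F w3))"
proof (cases "L a < L b")
  case True
  from p4_half[OF assms True] show ?thesis by blast
next
  case False
  then have ab: "F a < F b" using assms(1,7,13) by auto
  have h: "(F a < F b) \<longleftrightarrow> (L b < L a)" "(F b < F c) \<longleftrightarrow> (L c < L b)" "(F c < F d) \<longleftrightarrow> (L d < L c)"
    "\<not> ((F a < F c) \<longleftrightarrow> (L c < L a))" "\<not> ((F b < F d) \<longleftrightarrow> (L d < L b))" "\<not> ((F a < F d) \<longleftrightarrow> (L d < L a))"
    using assms(1,7,13) apply auto[1] using assms(4,10,14) apply auto[1] using assms(6,12,15) apply auto[1]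
    using assms(2,8,16) apply auto[1] using assms(5,11,17) apply auto[1] using assms(3,9,18) by auto[1]
  from p4_half[of F a b c d L, OF assms(7-12) assms(1-6) h ab] show ?thesis by blast
qed

definition p4free :: "'a set \<Rightarrow> ('a \<Rightarrow> 'a \<Rightarrow> bool) \<Rightarrow> bool" where
  "p4free V E \<longleftrightarrow> \<not> (\<exists>a\<in>V. \<exists>b\<in>V. \<exists>c\<in>V. \<exists>d\<in>V. a \<noteq> b \<and> a \<noteq> c \<and> a \<noteq> d \<and> b \<noteq> c \<and> b \<noteq> d \<and> c \<noteq> d \<and>
     E a b \<and> E b c \<and> E c d \<and> \<not> E a c \<and> \<not> E b d \<and> \<not> E a d)"

definition symon :: "'a set \<Rightarrow> ('a \<Rightarrow> 'a \<Rightarrow> bool) \<Rightarrow> bool" where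
  "symon V E \<longleftrightarrow> (\<forall>x\<in>V. \<forall>y\<in>V. E x y = E y x)"

definition vpat :: "'a set \<Rightarrow> ('a \<Rightarrow> nat) \<Rightarrow> ('a \<Rightarrow> nat) \<Rightarrow> bool" where
  "vpat V l f \<longleftrightarrow> (\<exists>w1\<in>V. \<exists>w2\<in>V. \<exists>w3\<in>V. \<exists>w4\<in>V. l w1 < l w2 \<and> l w2 < l w3 \<and> l w3 < l w4 \<and>
     ((f w3 < f w1 \<and> f w1 < f w4 \<and> f w4 < f w2) \<or> (f w2 < f w4 \<and> f w4 < f w1 \<and> f w1 < f w3)))"

definition pg :: "'a set \<Rightarrow> ('a \<Rightarrow> 'a \<Rightarrow> bool) \<Rightarrow> ('a \<Rightarrow> nat) \<Rightarrow> ('a \<Rightarrow> nat) \<Rightarrow> bool" where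
  "pg V E l f \<longleftrightarrow> bij_betw l V {1..card V} \<and> bij_betw f V {1..card V} \<and>
     (\<forall>u\<in>V. \<forall>v\<in>V. l v < l u \<longrightarrow> (E u v \<longleftrightarrow> f u < f v)) \<and> \<not> vpat V l f"

lemma sepgraph_p4free:
  assumes sym: "symon V E" and sg: "separable_perm_graph V E"
  shows "p4free V E"
proof -
  obtain l p where spg: "simple_perm_graph V E l p" and sp: "separable_perm (card V) p"
    using sg unfolding separable_perm_graph_def by blast
  define n where "n = card V"
  define F where "F x = inv p (l x)" for x
  have bl: "bij_betw l V {1..n}" and pp: "p permutes {1..n}"
    and ed: "\<And>u v. u \<in> V \<Longrightarrow> v \<in> V \<Longrightarrow> l u > l v \<Longrightarrow> (E u v \<longleftrightarrow> F u < F v)"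
    using spg unfolding simple_perm_graph_def n_def F_def by auto
  have ip: "inv p permutes {1..n}" using pp by (rule permutes_inv)
  have linj: "inj_on l V" using bl by (rule bij_betw_imp_inj_on)
  have lr: "l x \<in> {1..n}" if "x \<in> V" for x using bl that by (meson bij_betwE)
  have Fr: "F x \<in> {1..n}" if "x \<in> V" for x
    unfolding F_def using permutes_in_image[OF ip] lr[OF that] by simp
  have Finj: "F x \<noteq> F y" if "l x \<noteq> l y" for x y
    unfolding F_def using permutes_inj[OF ip] that by (meson injD)
  have pF: "p (F x) = l x" for x unfolding F_def using permutes_inverses(1)[OF pp] by simp
  have edge: "E u v \<longleftrightarrow> ((l u < l v) \<longleftrightarrow> (F v < F u))" if "u \<in> V" "v \<in> V" "u \<noteq> v" for u v
  proof -
    have ne: "l u \<noteq> l v" using linj that by (meson inj_on_contraD)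
    have nf: "F u \<noteq> F v" using Finj ne by blast
    show ?thesis
    proof (cases "l v < l u")
      case True
      then show ?thesis using ed[OF that(1,2) True] nf by auto
    next
      case False
      then have "l u < l v" using ne by auto
      then show ?thesis using ed[OF that(2,1)] sym that nf unfolding symon_def by auto
    qed
  qed
  show ?thesis
  proof (rule ccontr)
    assume "\<not> p4free V E"
    then obtain a b c d where abcd: "a \<in> V" "b \<in> V" "c \<in> V" "d \<in> V" "a \<noteq> b" "a \<noteq> c" "a \<noteq> d" "b \<noteq> c" "b \<noteq> d" "c \<noteq> d"
      "E a b" "E b c" "E c d" "\<not> E a c" "\<not> E b d" "\<not> E a d"
      unfolding p4free_def by blast
    have lne: "l x \<noteq> l y" if "x \<in> V" "y \<in> V" "x \<noteq> y" for x y using linj that by (meson inj_on_contraD)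
    have i1: "(l a < l b) \<longleftrightarrow> (F b < F a)" using edge[of a b] abcd by simp
    have i2: "(l b < l c) \<longleftrightarrow> (F c < F b)" using edge[of b c] abcd by simp
    have i3: "(l c < l d) \<longleftrightarrow> (F d < F c)" using edge[of c d] abcd by simp
    have i4: "\<not> ((l a < l c) \<longleftrightarrow> (F c < F a))" using edge[of a c] abcd by simp
    have i5: "\<not> ((l b < l d) \<longleftrightarrow> (F d < F b))" using edge[of b d] abcd by simp
    have i6: "\<not> ((l a < l d) \<longleftrightarrow> (F d < F a))" using edge[of a d] abcd by simp
    have n1: "l a \<noteq> l b" "l a \<noteq> l c" "l a \<noteq> l d" "l b \<noteq> l c" "l b \<noteq> l d" "l c \<noteq> l d"
      using lne abcd by auto
    obtain w1 w2 w3 w4 where w: "w1 \<in> {a,b,c,d}" "w2 \<in> {a,b,c,d}" "w3 \<in> {a,b,c,d}" "w4 \<in> {a,b,c,d}"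
      "l w1 < l w2" "l w2 < l w3" "l w3 < l w4"
      "(F w3 < F w1 \<and> F w1 < F w4 \<and> F w4 < F w2) \<or> (F w2 < F w4 \<and> F w4 < F w1 \<and> F w1 < F w3)"
      using p4_core[OF n1 Finj[OF n1(1)] Finj[OF n1(2)] Finj[OF n1(3)] Finj[OF n1(4)] Finj[OF n1(5)] Finj[OF n1(6)]
        i1 i2 i3 i4 i5 i6] by blast
    have wV: "w1 \<in> V" "w2 \<in> V" "w3 \<in> V" "w4 \<in> V" using w(1-4) abcd(1-4) by auto
    note r = Fr[OF wV(1)] Fr[OF wV(2)] Fr[OF wV(3)] Fr[OF wV(4)]
    from w(8) show False
    proof
      assume h: "F w3 < F w1 \<and> F w1 < F w4 \<and> F w4 < F w2"
      have "contains_3142 n p" unfolding contains_3142_def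
        apply (rule exI[of _ "F w3"], rule exI[of _ "F w1"], rule exI[of _ "F w4"], rule exI[of _ "F w2"])
        using h r w(5-7) pF by auto
      then show False using sp unfolding separable_perm_def n_def by simp
    next
      assume h: "F w2 < F w4 \<and> F w4 < F w1 \<and> F w1 < F w3"
      have "contains_2413 n p" unfolding contains_2413_def
        apply (rule exI[of _ "F w2"], rule exI[of _ "F w4"], rule exI[of _ "F w1"], rule exI[of _ "F w3"])
        using h r w(5-7) pF by auto
      then show False using sp unfolding separable_perm_def n_def by simp
    qed
  qed
qed


lemma pg_sep:
  assumes fin: "finite V" and g: "pg V E l f"
  shows "separable_perm_graph V E"
proof -
  define n where "n = card V"
  have bl: "bij_betw l V {1..n}" and bf: "bij_betw f V {1..n}"
    and ed: "\<And>u v. u \<in> V \<Longrightarrow> v \<in> V \<Longrightarrow> l v < l u \<Longrightarrow> (E u v \<longleftrightarrow> f u < f v)"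
    and nv: "\<not> vpat V l f"
    using g unfolding pg_def n_def by auto
  define q where "q i = (if i \<in> {1..n} then f (inv_into V l i) else i)" for i
  have b1: "bij_betw (f \<circ> inv_into V l) {1..n} {1..n}"
    using bij_betw_trans[OF bij_betw_inv_into[OF bl] bf] .
  have bq: "bij_betw q {1..n} {1..n}"
    using b1 by (rule bij_betw_cong[THEN iffD1, rotated]) (simp add: q_def)
  have qp: "q permutes {1..n}"
    by (rule bij_imp_permutes[OF bq]) (auto simp: q_def)
  define p where "p = inv q"
  have pp: "p permutes {1..n}" unfolding p_def by (rule permutes_inv[OF qp])
  have ipq: "inv p = q" unfolding p_def by (rule inv_inv_eq[OF permutes_bij[OF qp]])
  have linj: "inj_on l V" using bl by (rule bij_betw_imp_inj_on)
  have lr: "l x \<in> {1..n}" if "x \<in> V" for x using bl that by (meson bij_betwE)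
  have qf: "q (l u) = f u" if "u \<in> V" for u
    using lr[OF that] inv_into_f_f[OF linj that] by (simp add: q_def)
  have spg: "simple_perm_graph V E l p"
    unfolding simple_perm_graph_def using bl pp ed qf ipq by (simp add: n_def)
  have yy: "\<exists>y\<in>V. l y = p j \<and> f y = j" if "j \<in> {1..n}" for j
  proof -
    have pj: "p j \<in> {1..n}" using permutes_in_image[OF pp] that by simp
    have im: "p j \<in> l ` V" using bl pj by (simp add: bij_betw_def)
    define y where "y = inv_into V l (p j)"
    have yV: "y \<in> V" unfolding y_def using im by (rule inv_into_into)
    have ly: "l y = p j" unfolding y_def using im by (rule f_inv_into_f)
    have "f y = q (p j)" using qf[OF yV] ly by simp
    also have "\<dots> = j" using permutes_inverses(2)[OF pp] ipq by metis
    finally show ?thesis using yV ly by blast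
  qed
  have n1: "\<not> contains_2413 n p"
  proof
    assume "contains_2413 n p"
    then obtain i1 i2 i3 i4 where h: "1 \<le> i1" "i1 < i2" "i2 < i3" "i3 < i4" "i4 \<le> n"
      "p i3 < p i1" "p i1 < p i4" "p i4 < p i2" unfolding contains_2413_def by blast
    obtain y1 where y1: "y1 \<in> V" "l y1 = p i1" "f y1 = i1" using yy[of i1] h by auto
    obtain y2 where y2: "y2 \<in> V" "l y2 = p i2" "f y2 = i2" using yy[of i2] h by auto
    obtain y3 where y3: "y3 \<in> V" "l y3 = p i3" "f y3 = i3" using yy[of i3] h by auto
    obtain y4 where y4: "y4 \<in> V" "l y4 = p i4" "f y4 = i4" using yy[of i4] h by auto
    have "vpat V l f" unfolding vpat_def
      apply (rule bexI[of _ y3], rule bexI[of _ y1], rule bexI[of _ y4], rule bexI[of _ y2])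
      using h y1 y2 y3 y4 by auto
    then show False using nv by simp
  qed
  have n2: "\<not> contains_3142 n p"
  proof
    assume "contains_3142 n p"
    then obtain i1 i2 i3 i4 where h: "1 \<le> i1" "i1 < i2" "i2 < i3" "i3 < i4" "i4 \<le> n"
      "p i2 < p i4" "p i4 < p i1" "p i1 < p i3" unfolding contains_3142_def by blast
    obtain y1 where y1: "y1 \<in> V" "l y1 = p i1" "f y1 = i1" using yy[of i1] h by auto
    obtain y2 where y2: "y2 \<in> V" "l y2 = p i2" "f y2 = i2" using yy[of i2] h by auto
    obtain y3 where y3: "y3 \<in> V" "l y3 = p i3" "f y3 = i3" using yy[of i3] h by auto
    obtain y4 where y4: "y4 \<in> V" "l y4 = p i4" "f y4 = i4" using yy[of i4] h by auto
    have "vpat V l f" unfolding vpat_def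
      apply (rule bexI[of _ y2], rule bexI[of _ y4], rule bexI[of _ y1], rule bexI[of _ y3])
      using h y1 y2 y3 y4 by auto
    then show False using nv by simp
  qed
  show ?thesis unfolding separable_perm_graph_def separable_perm_def
    using spg pp n1 n2 by (auto simp: n_def)
qed


lemma vpat_combine:
  fixes lA lB fA fB :: "'a \<Rightarrow> nat"
  assumes nA: "\<not> vpat A lA fA" and nB: "\<not> vpat B lB fB" and disj: "A \<inter> B = {}"
    and bA: "\<And>x. x \<in> A \<Longrightarrow> lA x \<le> na \<and> fA x \<le> na"
    and bB: "\<And>x. x \<in> B \<Longrightarrow> 1 \<le> lB x \<and> 1 \<le> fB x \<and> fB x \<le> nb"
    and bA1: "\<And>x. x \<in> A \<Longrightarrow> 1 \<le> fA x"
    and off: "(sA = 0 \<and> sB = na) \<or> (sA = nb \<and> sB = 0)"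
  shows "\<not> vpat (A \<union> B) (\<lambda>x. if x \<in> A then lA x else na + lB x) (\<lambda>x. if x \<in> A then sA + fA x else sB + fB x)"
proof
  assume "vpat (A \<union> B) (\<lambda>x. if x \<in> A then lA x else na + lB x) (\<lambda>x. if x \<in> A then sA + fA x else sB + fB x)"
  then obtain w1 w2 w3 w4 where w: "w1 \<in> A \<union> B" "w2 \<in> A \<union> B" "w3 \<in> A \<union> B" "w4 \<in> A \<union> B" and
    h: "(if w1 \<in> A then lA w1 else na + lB w1) < (if w2 \<in> A then lA w2 else na + lB w2)"
       "(if w2 \<in> A then lA w2 else na + lB w2) < (if w3 \<in> A then lA w3 else na + lB w3)"
       "(if w3 \<in> A then lA w3 else na + lB w3) < (if w4 \<in> A then lA w4 else na + lB w4)"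
    and p: "((if w3 \<in> A then sA + fA w3 else sB + fB w3) < (if w1 \<in> A then sA + fA w1 else sB + fB w1) \<and>
        (if w1 \<in> A then sA + fA w1 else sB + fB w1) < (if w4 \<in> A then sA + fA w4 else sB + fB w4) \<and>
        (if w4 \<in> A then sA + fA w4 else sB + fB w4) < (if w2 \<in> A then sA + fA w2 else sB + fB w2)) \<or>
       ((if w2 \<in> A then sA + fA w2 else sB + fB w2) < (if w4 \<in> A then sA + fA w4 else sB + fB w4) \<and>
        (if w4 \<in> A then sA + fA w4 else sB + fB w4) < (if w1 \<in> A then sA + fA w1 else sB + fB w1) \<and>
        (if w1 \<in> A then sA + fA w1 else sB + fB w1) < (if w3 \<in> A then sA + fA w3 else sB + fB w3))"
    unfolding vpat_def by blast
  have nA': "\<not> (w1 \<in> A \<and> w2 \<in> A \<and> w3 \<in> A \<and> w4 \<in> A \<and> lA w1 < lA w2 \<and> lA w2 < lA w3 \<and> lA w3 < lA w4 \<and>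
     ((fA w3 < fA w1 \<and> fA w1 < fA w4 \<and> fA w4 < fA w2) \<or> (fA w2 < fA w4 \<and> fA w4 < fA w1 \<and> fA w1 < fA w3)))"
    using nA unfolding vpat_def by blast
  have nB': "\<not> (w1 \<in> B \<and> w2 \<in> B \<and> w3 \<in> B \<and> w4 \<in> B \<and> lB w1 < lB w2 \<and> lB w2 < lB w3 \<and> lB w3 < lB w4 \<and>
     ((fB w3 < fB w1 \<and> fB w1 < fB w4 \<and> fB w4 < fB w2) \<or> (fB w2 < fB w4 \<and> fB w4 < fB w1 \<and> fB w1 < fB w3)))"
    using nB unfolding vpat_def by blast
  have m: "\<And>x. x \<in> A \<union> B \<Longrightarrow> x \<notin> A \<Longrightarrow> x \<in> B" by blast
  have lb: "\<And>x. x \<in> A \<union> B \<Longrightarrow> x \<notin> A \<Longrightarrow> 1 \<le> lB x \<and> 1 \<le> fB x \<and> fB x \<le> nb" using bB m by blast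
  have o2: "w1 \<in> A" if "w2 \<in> A" using h(1) that bA[OF that] lb[OF w(1)] by (auto split: if_splits)
  have o3: "w2 \<in> A" if "w3 \<in> A" using h(2) that bA[OF that] lb[OF w(2)] by (auto split: if_splits)
  have o4: "w3 \<in> A" if "w4 \<in> A" using h(3) that bA[OF that] lb[OF w(3)] by (auto split: if_splits)
  have bw: "1 \<le> fA x \<and> fA x \<le> na" if "x \<in> A" for x using bA[OF that] bA1[OF that] by simp
  consider "w1 \<in> A" "w2 \<in> A" "w3 \<in> A" "w4 \<in> A" | "w1 \<in> A" "w2 \<in> A" "w3 \<in> A" "w4 \<notin> A"
    | "w1 \<in> A" "w2 \<in> A" "w3 \<notin> A" "w4 \<notin> A" | "w1 \<in> A" "w2 \<notin> A" "w3 \<notin> A" "w4 \<notin> A"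
    | "w1 \<notin> A" "w2 \<notin> A" "w3 \<notin> A" "w4 \<notin> A"
    using o2 o3 o4 by blast
  then show False
  proof cases
    case 1
    then show False using h p nA' by simp
  next
    case 2
    then show False using p off bw[of w1] bw[of w2] bw[of w3] lb[OF w(4)] by auto
  next
    case 3
    then show False using p off bw[of w1] bw[of w2] lb[OF w(3)] lb[OF w(4)] by auto
  next
    case 4
    then show False using p off bw[of w1] lb[OF w(2)] lb[OF w(3)] lb[OF w(4)] by auto
  next
    case 5
    then show False using h p nB' m w by simp
  qed
qed


lemma bij_join:
  assumes g: "bij_betw g A {1..a}" and h: "bij_betw h B {1..(b::nat)}" and disj: "A \<inter> B = {}"
  shows "bij_betw (\<lambda>x. if x \<in> A then g x else a + h x) (A \<union> B) {1..a+b}"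
proof -
  have s: "bij_betw ((+) a) {1..b} {a+1..a+b}" by (simp add: add.commute)
  have hb: "bij_betw (\<lambda>x. a + h x) B {a+1..a+b}"
    using bij_betw_trans[OF h s] by (simp add: comp_def)
  have "bij_betw (\<lambda>x. if x \<in> A then g x else a + h x) (A \<union> B) ({1..a} \<union> {a+1..a+b})"
    by (rule bij_betw_disjoint_Un[OF g hb disj]) auto
  moreover have "{1..a} \<union> {a+1..a+b} = {1..a+b}" by auto
  ultimately show ?thesis by simp
qed

lemma pg_combine:
  assumes disj: "A \<inter> B = {}" and finA: "finite A" and finB: "finite B"
    and gA: "pg A E lA fA" and gB: "pg B E lB fB" and sym: "symon (A \<union> B) E"
    and cr: "(\<forall>a\<in>A. \<forall>b\<in>B. \<not> E a b) \<or> (\<forall>a\<in>A. \<forall>b\<in>B. E a b)"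
  shows "\<exists>l f. pg (A \<union> B) E l f"
proof -
  define na where "na = card A"
  define nb where "nb = card B"
  have cu: "card (A \<union> B) = na + nb" using card_Un_disjoint[OF finA finB disj] na_def nb_def by simp
  have blA: "bij_betw lA A {1..na}" and bfA: "bij_betw fA A {1..na}"
    and edA: "\<And>u v. u \<in> A \<Longrightarrow> v \<in> A \<Longrightarrow> lA v < lA u \<Longrightarrow> (E u v \<longleftrightarrow> fA u < fA v)"
    and nvA: "\<not> vpat A lA fA" using gA unfolding pg_def na_def by auto
  have blB: "bij_betw lB B {1..nb}" and bfB: "bij_betw fB B {1..nb}"
    and edB: "\<And>u v. u \<in> B \<Longrightarrow> v \<in> B \<Longrightarrow> lB v < lB u \<Longrightarrow> (E u v \<longleftrightarrow> fB u < fB v)"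
    and nvB: "\<not> vpat B lB fB" using gB unfolding pg_def nb_def by auto
  have rA: "1 \<le> lA x \<and> lA x \<le> na \<and> 1 \<le> fA x \<and> fA x \<le> na" if "x \<in> A" for x
    using bij_betwE[OF blA] bij_betwE[OF bfA] that by auto
  have rB: "1 \<le> lB x \<and> lB x \<le> nb \<and> 1 \<le> fB x \<and> fB x \<le> nb" if "x \<in> B" for x
    using bij_betwE[OF blB] bij_betwE[OF bfB] that by auto
  define l where "l x = (if x \<in> A then lA x else na + lB x)" for x
  have bl: "bij_betw l (A \<union> B) {1..card (A \<union> B)}"
    unfolding cu l_def by (rule bij_join[OF blA blB disj])
  have nAB: "x \<notin> A" if "x \<in> B" for x using disj that by blast
  from cr show ?thesis
  proof
    assume no: "\<forall>a\<in>A. \<forall>b\<in>B. \<not> E a b"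
    define f where "f x = (if x \<in> A then fA x else na + fB x)" for x
    have bf: "bij_betw f (A \<union> B) {1..card (A \<union> B)}"
      unfolding cu f_def by (rule bij_join[OF bfA bfB disj])
    have ed: "E u v \<longleftrightarrow> f u < f v" if uv: "u \<in> A \<union> B" "v \<in> A \<union> B" "l v < l u" for u v
    proof -
      consider "u \<in> A" "v \<in> A" | "u \<in> B" "v \<in> B" | "u \<in> B" "v \<in> A" | "u \<in> A" "v \<in> B" using uv by blast
      then show ?thesis
      proof cases
        case 1 then show ?thesis using edA[of u v] uv(3) by (simp add: l_def f_def)
      next
        case 2 then show ?thesis using edB[of u v] uv(3) nAB by (simp add: l_def f_def)
      next
        case 3
        have "\<not> E u v" using no sym 3 unfolding symon_def by blast
        then show ?thesis using 3 nAB rA[of v] rB[of u] by (simp add: f_def)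
      next
        case 4 then show ?thesis using uv(3) nAB rA[of u] rB[of v] by (simp add: l_def)
      qed
    qed
    have nv: "\<not> vpat (A \<union> B) l f"
    proof -
      have "\<not> vpat (A \<union> B) (\<lambda>x. if x \<in> A then lA x else na + lB x) (\<lambda>x. if x \<in> A then 0 + fA x else na + fB x)"
        by (rule vpat_combine[OF nvA nvB disj]) (use rA rB in auto)
      moreover have "(\<lambda>x. if x \<in> A then 0 + fA x else na + fB x) = f" by (simp add: f_def fun_eq_iff)
      moreover have "(\<lambda>x. if x \<in> A then lA x else na + lB x) = l" by (simp add: l_def fun_eq_iff)
      ultimately show ?thesis by simp
    qed
    have "pg (A \<union> B) E l f" unfolding pg_def using bl bf ed nv by blast
    then show ?thesis by blast
  next
    assume al: "\<forall>a\<in>A. \<forall>b\<in>B. E a b"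
    define f where "f x = (if x \<in> A then nb + fA x else fB x)" for x
    have bf0: "bij_betw (\<lambda>x. if x \<in> B then fB x else nb + fA x) (B \<union> A) {1..nb+na}"
      using disj by (intro bij_join[OF bfB bfA]) auto
    have bf: "bij_betw f (A \<union> B) {1..card (A \<union> B)}"
      unfolding cu f_def
    proof -
      have e: "bij_betw (\<lambda>x. if x \<in> B then fB x else nb + fA x) (A \<union> B) {1..na+nb}"
        using bf0 by (simp add: Un_commute add.commute)
      show "bij_betw (\<lambda>x. if x \<in> A then nb + fA x else fB x) (A \<union> B) {1..na+nb}"
        by (rule bij_betw_cong[THEN iffD1, OF _ e]) (use nAB in auto)
    qed
    have ed: "E u v \<longleftrightarrow> f u < f v" if uv: "u \<in> A \<union> B" "v \<in> A \<union> B" "l v < l u" for u v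
    proof -
      consider "u \<in> A" "v \<in> A" | "u \<in> B" "v \<in> B" | "u \<in> B" "v \<in> A" | "u \<in> A" "v \<in> B" using uv by blast
      then show ?thesis
      proof cases
        case 1 then show ?thesis using edA[of u v] uv(3) by (simp add: l_def f_def)
      next
        case 2 then show ?thesis using edB[of u v] uv(3) nAB by (simp add: l_def f_def)
      next
        case 3
        have "E u v" using al sym 3 unfolding symon_def by blast
        then show ?thesis using 3 nAB rA[of v] rB[of u] by (simp add: f_def)
      next
        case 4 then show ?thesis using uv(3) nAB rA[of u] rB[of v] by (simp add: l_def)
      qed
    qed
    have nv: "\<not> vpat (A \<union> B) l f"
    proof -
      have "\<not> vpat (A \<union> B) (\<lambda>x. if x \<in> A then lA x else na + lB x) (\<lambda>x. if x \<in> A then nb + fA x else 0 + fB x)"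
        by (rule vpat_combine[OF nvA nvB disj]) (use rA rB in auto)
      moreover have "(\<lambda>x. if x \<in> A then nb + fA x else 0 + fB x) = f" by (simp add: f_def fun_eq_iff)
      moreover have "(\<lambda>x. if x \<in> A then lA x else na + lB x) = l" by (simp add: l_def fun_eq_iff)
      ultimately show ?thesis by simp
    qed
    have "pg (A \<union> B) E l f" unfolding pg_def using bl bf ed nv by blast
    then show ?thesis by blast
  qed
qed


definition splits :: "'a set \<Rightarrow> ('a \<Rightarrow> 'a \<Rightarrow> bool) \<Rightarrow> bool" where
  "splits V E \<longleftrightarrow> (\<exists>A. A \<subseteq> V \<and> A \<noteq> {} \<and> A \<noteq> V \<and>
     ((\<forall>a\<in>A. \<forall>b\<in>V - A. \<not> E a b) \<or> (\<forall>a\<in>A. \<forall>b\<in>V - A. E a b)))"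

lemma p4free_mono: "W \<subseteq> V \<Longrightarrow> p4free V E \<Longrightarrow> p4free W E"
  unfolding p4free_def by blast

lemma symon_mono: "W \<subseteq> V \<Longrightarrow> symon V E \<Longrightarrow> symon W E"
  unfolding symon_def by blast

lemma main_step:
  assumes sym: "symon V E" and pf: "p4free V E" and vV: "v \<in> V"
    and A0: "A0 \<subseteq> V - {v}" "A0 \<noteq> {}" "A0 \<noteq> V - {v}" "\<forall>a\<in>A0. \<forall>b\<in>(V - {v}) - A0. \<not> E a b"
  shows "splits V E"
proof (rule ccontr)
  assume ns: "\<not> splits V E"
  define V' where "V' = V - {v}"
  define R where "R x y \<longleftrightarrow> x \<in> V' \<and> y \<in> V' \<and> E x y" for x y
  have sy: "E x y = E y x" if "x \<in> V" "y \<in> V" for x y using sym that unfolding symon_def by blast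
  have "\<exists>w\<in>V'. \<not> E v w"
  proof (rule ccontr)
    assume "\<not> (\<exists>w\<in>V'. \<not> E v w)"
    then have "\<forall>a\<in>{v}. \<forall>b\<in>V - {v}. E a b" unfolding V'_def by blast
    moreover have "{v} \<noteq> V" using A0(1,2) by blast
    ultimately have "splits V E" unfolding splits_def using vV by blast
    then show False using ns by simp
  qed
  then obtain w where wV: "w \<in> V'" and nvw: "\<not> E v w" by blast
  define C where "C = {x. R\<^sup>*\<^sup>* w x}"
  have wC: "w \<in> C" unfolding C_def by simp
  have CV: "C \<subseteq> V'"
  proof
    fix x assume "x \<in> C"
    then have "R\<^sup>*\<^sup>* w x" unfolding C_def by simp
    then show "x \<in> V'" using wV by (induction rule: rtranclp_induct) (auto simp: R_def)
  qed
  have clos: "y \<in> C" if "x \<in> C" "y \<in> V'" "E x y" for x y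
  proof -
    have "x \<in> V'" using that(1) CV by blast
    then have "R x y" using that(2,3) unfolding R_def by simp
    then show ?thesis using that(1) unfolding C_def by (simp add: rtranclp.rtrancl_into_rtrancl)
  qed
  define S where "S = (if w \<in> A0 then A0 else V' - A0)"
  have side: "x \<in> S" if "R\<^sup>*\<^sup>* w x" for x
    using that
  proof (induction rule: rtranclp_induct)
    case base then show ?case using wV by (simp add: S_def)
  next
    case (step y z)
    then have yz: "y \<in> V'" "z \<in> V'" "E y z" unfolding R_def by auto
    show ?case
    proof (cases "w \<in> A0")
      case True
      then show ?thesis using step.IH yz A0(4) unfolding S_def V'_def by auto
    next
      case False
      have "E z y" using sy yz unfolding V'_def by auto
      then show ?thesis using False step.IH yz A0(4) unfolding S_def V'_def by auto
    qed
  qed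
  have "\<exists>t. t \<in> V' \<and> t \<notin> C"
  proof -
    obtain t where "t \<in> V' - S" using A0(1,2,3) unfolding S_def V'_def by (cases "w \<in> A0") auto
    then show ?thesis using side unfolding C_def by blast
  qed
  then obtain t0 where t0: "t0 \<in> V'" "t0 \<notin> C" by blast
  have "\<exists>a\<in>C. E v a"
  proof (rule ccontr)
    assume na: "\<not> (\<exists>a\<in>C. E v a)"
    have "\<forall>a\<in>C. \<forall>b\<in>V - C. \<not> E a b"
    proof (intro ballI)
      fix a b assume a: "a \<in> C" and b: "b \<in> V - C"
      show "\<not> E a b"
      proof (cases "b = v")
        case True then show ?thesis using na a sy[of a v] CV vV unfolding V'_def by auto
      next
        case False then show ?thesis using clos[OF a] b unfolding V'_def by auto
      qed
    qed
    moreover have "C \<subseteq> V" "C \<noteq> {}" "C \<noteq> V" using CV wC vV unfolding V'_def by auto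
    ultimately have "splits V E" unfolding splits_def by blast
    then show False using ns by simp
  qed
  then obtain a where aC: "a \<in> C" and va: "E v a" by blast
  have "\<exists>b\<in>V' - C. E v b"
  proof (rule ccontr)
    assume nb: "\<not> (\<exists>b\<in>V' - C. E v b)"
    define D where "D = V' - C"
    have "\<forall>x\<in>D. \<forall>y\<in>V - D. \<not> E x y"
    proof (intro ballI)
      fix x y assume x: "x \<in> D" and y: "y \<in> V - D"
      show "\<not> E x y"
      proof (cases "y = v")
        case True then show ?thesis using nb x sy[of x v] vV unfolding D_def V'_def by auto
      next
        case False
        then have yC: "y \<in> C" using y unfolding D_def V'_def by auto
        show ?thesis
        proof
          assume "E x y"
          then have "E y x" using sy x yC CV unfolding D_def V'_def by auto
          then have "x \<in> C" using clos[OF yC] x unfolding D_def by auto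
          then show False using x unfolding D_def by auto
        qed
      qed
    qed
    moreover have "D \<subseteq> V" "D \<noteq> {}" "D \<noteq> V" using t0 vV unfolding D_def V'_def by auto
    ultimately have "splits V E" unfolding splits_def by blast
    then show False using ns by simp
  qed
  then obtain b where bV: "b \<in> V'" "b \<notin> C" and vb: "E v b" by blast
  have path: "E y v \<longrightarrow> (\<exists>s t. R\<^sup>*\<^sup>* w s \<and> R s t \<and> \<not> E s v \<and> E t v)" if "R\<^sup>*\<^sup>* w y" for y
    using that
  proof (induction rule: rtranclp_induct)
    case base then show ?case using nvw sy[of v w] vV wV unfolding V'_def by auto
  next
    case (step y z)
    then show ?case by (cases "E y v") auto
  qed
  have "E a v" using va sy[of v a] vV aC CV unfolding V'_def by auto
  then obtain s t where st: "R\<^sup>*\<^sup>* w s" "R s t" "\<not> E s v" "E t v"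
    using path[of a] aC unfolding C_def by auto
  have sC: "s \<in> C" using st(1) unfolding C_def by simp
  have tC: "t \<in> C" using st(1,2) unfolding C_def by (simp add: rtranclp.rtrancl_into_rtrancl)
  have stV: "s \<in> V'" "t \<in> V'" "E s t" using st(2) unfolding R_def by auto
  have ntb: "\<not> E t b" using clos[OF tC bV(1)] bV(2) by auto
  have nsb: "\<not> E s b" using clos[OF sC bV(1)] bV(2) by auto
  have "\<not> p4free V E"
    unfolding p4free_def not_not
    apply (rule bexI[of _ s], rule bexI[of _ t], rule bexI[of _ v], rule bexI[of _ b])
    using stV st(3,4) vb ntb nsb sC tC bV vV unfolding V'_def by auto
  then show False using pf by simp
qed

lemma seinsche:
  assumes "finite V" "2 \<le> card V" "symon V E" "p4free V E"
  shows "splits V E"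
  using assms
proof (induction "card V" arbitrary: V rule: less_induct)
  case less
  show ?case
  proof (cases "card V = 2")
    case True
    then obtain x y where V: "V = {x, y}" "x \<noteq> y" by (meson card_2_iff)
    have "{x} \<subseteq> V" "{x} \<noteq> {}" "{x} \<noteq> V" "V - {x} = {y}" using V by auto
    then show ?thesis unfolding splits_def by (cases "E x y") (rule exI[of _ "{x}"]; auto)+
  next
    case False
    then have c3: "3 \<le> card V" using less.prems(2) by simp
    then obtain v where vV: "v \<in> V" by fastforce
    define V' where "V' = V - {v}"
    have cV': "card V' = card V - 1" using vV less.prems(1) unfolding V'_def by simp
    have "splits V' E"
      by (rule less.hyps) (use cV' c3 less.prems vV in \<open>auto simp: V'_def intro: symon_mono p4free_mono\<close>)
    then obtain A0 where A0: "A0 \<subseteq> V'" "A0 \<noteq> {}" "A0 \<noteq> V'"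
      "(\<forall>a\<in>A0. \<forall>b\<in>V' - A0. \<not> E a b) \<or> (\<forall>a\<in>A0. \<forall>b\<in>V' - A0. E a b)"
      unfolding splits_def by blast
    from A0(4) show ?thesis
    proof
      assume "\<forall>a\<in>A0. \<forall>b\<in>V' - A0. \<not> E a b"
      then show ?thesis using main_step[OF less.prems(3,4) vV, of A0] A0(1-3) unfolding V'_def by auto
    next
      assume al: "\<forall>a\<in>A0. \<forall>b\<in>V' - A0. E a b"
      define E' where "E' x y \<longleftrightarrow> x \<noteq> y \<and> \<not> E x y" for x y
      have s': "symon V E'" using less.prems(3) unfolding symon_def E'_def by auto
      have p': "p4free V E'"
      proof -
        have sy: "E x y = E y x" if "x \<in> V" "y \<in> V" for x y using less.prems(3) that unfolding symon_def by blast
        show ?thesis unfolding p4free_def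
        proof
          assume "\<exists>a\<in>V. \<exists>b\<in>V. \<exists>c\<in>V. \<exists>d\<in>V. a \<noteq> b \<and> a \<noteq> c \<and> a \<noteq> d \<and> b \<noteq> c \<and> b \<noteq> d \<and> c \<noteq> d \<and>
            E' a b \<and> E' b c \<and> E' c d \<and> \<not> E' a c \<and> \<not> E' b d \<and> \<not> E' a d"
          then obtain a b c d where h: "a \<in> V" "b \<in> V" "c \<in> V" "d \<in> V" "a \<noteq> b" "a \<noteq> c" "a \<noteq> d" "b \<noteq> c" "b \<noteq> d" "c \<noteq> d"
            "E' a b" "E' b c" "E' c d" "\<not> E' a c" "\<not> E' b d" "\<not> E' a d" by blast
          have "E c a" "E a d" "E d b" "\<not> E c d" "\<not> E a b" "\<not> E c b"
            using h sy[of a c] sy[of b d] sy[of b c] unfolding E'_def by auto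
          then have "\<not> p4free V E" unfolding p4free_def not_not using h
            by (intro bexI[of _ c] bexI[of _ a] bexI[of _ d] bexI[of _ b]) auto
          then show False using less.prems(4) by simp
        qed
      qed
      have "splits V E'"
        by (rule main_step[OF s' p' vV, of A0]) (use A0(1-3) al in \<open>auto simp: V'_def E'_def\<close>)
      then obtain A where A: "A \<subseteq> V" "A \<noteq> {}" "A \<noteq> V"
        "(\<forall>a\<in>A. \<forall>b\<in>V - A. \<not> E' a b) \<or> (\<forall>a\<in>A. \<forall>b\<in>V - A. E' a b)"
        unfolding splits_def by blast
      have "(\<forall>a\<in>A. \<forall>b\<in>V - A. E a b) \<or> (\<forall>a\<in>A. \<forall>b\<in>V - A. \<not> E a b)"
        using A(4)
      proof
        assume h: "\<forall>a\<in>A. \<forall>b\<in>V - A. \<not> E' a b"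
        have "\<forall>a\<in>A. \<forall>b\<in>V - A. E a b"
        proof (intro ballI)
          fix a b assume "a \<in> A" "b \<in> V - A"
          then show "E a b" using h unfolding E'_def by force
        qed
        then show ?thesis by blast
      next
        assume h: "\<forall>a\<in>A. \<forall>b\<in>V - A. E' a b"
        then show ?thesis unfolding E'_def by blast
      qed
      then show ?thesis using A(1-3) unfolding splits_def by blast
    qed
  qed
qed

lemma cograph_pg:
  assumes "finite V" "symon V E" "p4free V E"
  shows "\<exists>l f. pg V E l f"
  using assms
proof (induction "card V" arbitrary: V rule: less_induct)
  case less
  show ?case
  proof (cases "card V \<le> 1")
    case True
    then consider "V = {}" | x where "V = {x}" using less.prems(1)
      by (metis card_0_eq card_1_singletonE le_Suc_eq One_nat_def le_zero_eq)
    then show ?thesis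
    proof cases
      case 1
      have "pg V E (\<lambda>_. 0) (\<lambda>_. 0)" using 1 by (simp add: pg_def vpat_def bij_betw_def)
      then show ?thesis by blast
    next
      case 2
      have "pg V E (\<lambda>_. 1) (\<lambda>_. 1)" using 2 by (auto simp: pg_def vpat_def bij_betw_def)
      then show ?thesis by blast
    qed
  next
    case False
    then have "splits V E" by (intro seinsche less.prems) simp
    then obtain A where A: "A \<subseteq> V" "A \<noteq> {}" "A \<noteq> V"
      "(\<forall>a\<in>A. \<forall>b\<in>V - A. \<not> E a b) \<or> (\<forall>a\<in>A. \<forall>b\<in>V - A. E a b)"
      unfolding splits_def by blast
    have fA: "finite A" "finite (V - A)" using A(1) less.prems(1) finite_subset by auto
    have cA: "card A < card V" using A less.prems(1) by (meson psubsetI psubset_card_mono)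
    have cB: "card (V - A) < card V"
    proof (rule psubset_card_mono[OF less.prems(1)])
      show "V - A \<subset> V" using A(1,2) by blast
    qed
    obtain lA fA' where gA: "pg A E lA fA'"
      using less.hyps[OF cA fA(1)] less.prems A(1) symon_mono p4free_mono by metis
    obtain lB fB where gB: "pg (V - A) E lB fB"
      using less.hyps[OF cB fA(2)] less.prems symon_mono p4free_mono Diff_subset by metis
    have VV: "A \<union> (V - A) = V" using A(1) by blast
    have "\<exists>l f. pg (A \<union> (V - A)) E l f"
      by (rule pg_combine[OF _ fA gA gB]) (use A(4) less.prems(2) VV in auto)
    then show ?thesis using VV by simp
  qed
qed



lemma cograph_sep:
  assumes "finite V" "symon V E" "p4free V E"
  shows "separable_perm_graph V E"
  using cograph_pg[OF assms] pg_sep[OF assms(1)] by blast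

lemma card3_le2: "card {a, b, c} \<le> 2 \<Longrightarrow> a = b \<or> a = c \<or> b = c"
  by (cases "a = b \<or> a = c \<or> b = c") auto

lemma card3_le: "card {a, b, e} \<le> 3"
  by (cases "a = b"; cases "a = e"; cases "b = e") (simp_all add: card_insert_if)
lemma card4_distinct: "card {x, y, u, v} = 4 \<Longrightarrow> x \<noteq> y \<and> x \<noteq> u \<and> x \<noteq> v \<and> y \<noteq> u \<and> y \<noteq> v \<and> u \<noteq> v"
proof (rule ccontr)
  assume c: "card {x, y, u, v} = 4" and n: "\<not> (x \<noteq> y \<and> x \<noteq> u \<and> x \<noteq> v \<and> y \<noteq> u \<and> y \<noteq> v \<and> u \<noteq> v)"
  have "\<exists>a b e. {x, y, u, v} = {a, b, e}"
  proof -
    consider "x = y" | "x = u" | "x = v" | "y = u" | "y = v" | "u = v" using n by blast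
    then show ?thesis
    proof cases
      case 1 then show ?thesis by (intro exI[of _ y] exI[of _ u] exI[of _ v]) simp
    next
      case 2 then show ?thesis by (intro exI[of _ y] exI[of _ u] exI[of _ v]) auto
    next
      case 3 then show ?thesis by (intro exI[of _ y] exI[of _ u] exI[of _ v]) auto
    next
      case 4 then show ?thesis by (intro exI[of _ x] exI[of _ u] exI[of _ v]) auto
    next
      case 5 then show ?thesis by (intro exI[of _ x] exI[of _ u] exI[of _ v]) auto
    next
      case 6 then show ?thesis by (intro exI[of _ x] exI[of _ y] exI[of _ v]) auto
    qed
  qed
  then obtain a b e where "{x, y, u, v} = {a, b, e}" by blast
  then have "card {x, y, u, v} \<le> 3" using card3_le by metis
  then show False using c by simp
qed
lemma mono_symon:
  assumes "\<forall>x\<in>V. \<forall>y\<in>V. x \<noteq> y \<longrightarrow> c x y = c y x" "W \<subseteq> V"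
  shows "symon W (mono_edge c i)"
  unfolding symon_def mono_edge_def
proof (intro ballI)
  fix x y assume "x \<in> W" "y \<in> W"
  then have "x \<in> V" "y \<in> V" using assms(2) by auto
  then show "(x \<noteq> y \<and> c x y = i) = (y \<noteq> x \<and> c y x = i)"
    using assms(1) by (cases "x = y") auto
qed

lemma su_p4free:
  assumes su: "is_su_graph_rep V c"
  shows "p4free V (mono_edge c i)"
proof -
  obtain d m where sd: "symbolic_ultrametric V d m" and ag: "\<forall>x\<in>V. \<forall>y\<in>V. x \<noteq> y \<longrightarrow> d x y = c x y"
    using su unfolding is_su_graph_rep_def by blast
  have dsym: "\<forall>x\<in>V. \<forall>y\<in>V. d x y = d y x"
    and U2: "\<forall>x\<in>V. \<forall>y\<in>V. \<forall>z\<in>V. card {d x y, d x z, d y z} \<le> 2"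
    and U3: "\<not> (\<exists>x\<in>V. \<exists>y\<in>V. \<exists>u\<in>V. \<exists>v\<in>V. card {x, y, u, v} = 4 \<and>
          d x y = d y u \<and> d y u = d u v \<and> d u v \<noteq> d v y \<and> d v y = d x v \<and> d x v = d x u)"
    using sd unfolding symbolic_ultrametric_def by auto
  show ?thesis unfolding p4free_def
  proof
    assume "\<exists>x\<in>V. \<exists>y\<in>V. \<exists>u\<in>V. \<exists>v\<in>V. x \<noteq> y \<and> x \<noteq> u \<and> x \<noteq> v \<and> y \<noteq> u \<and> y \<noteq> v \<and> u \<noteq> v \<and>
      mono_edge c i x y \<and> mono_edge c i y u \<and> mono_edge c i u v \<and> \<not> mono_edge c i x u \<and>
      \<not> mono_edge c i y v \<and> \<not> mono_edge c i x v"
    then obtain x y u v where V: "x \<in> V" "y \<in> V" "u \<in> V" "v \<in> V"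
      and ds: "x \<noteq> y" "x \<noteq> u" "x \<noteq> v" "y \<noteq> u" "y \<noteq> v" "u \<noteq> v"
      and e: "c x y = i" "c y u = i" "c u v = i" "c x u \<noteq> i" "c y v \<noteq> i" "c x v \<noteq> i"
      unfolding mono_edge_def by blast
    have e': "d x y = i" "d y u = i" "d u v = i" "d x u \<noteq> i" "d y v \<noteq> i" "d x v \<noteq> i"
      using e ag V ds by auto
    have A: "d x u = d x v" using card3_le2[OF U2[rule_format, OF V(1,3,4)]] e' by auto
    have B: "d y v = d x v" using card3_le2[OF U2[rule_format, OF V(1,2,4)]] e' by auto
    have C: "d v y = d y v" using dsym V by blast
    have c4: "card {x, y, u, v} = 4" using ds by simp
    have g: "d x y = d y u" "d y u = d u v" "d u v \<noteq> d v y" "d v y = d x v" "d x v = d x u"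
      using e' A B C by simp_all
    have "\<exists>x\<in>V. \<exists>y\<in>V. \<exists>u\<in>V. \<exists>v\<in>V. card {x, y, u, v} = 4 \<and>
          d x y = d y u \<and> d y u = d u v \<and> d u v \<noteq> d v y \<and> d v y = d x v \<and> d x v = d x u"
      using V c4 g by blast
    then show False using U3 by blast
  qed
qed

theorem corollary6p6:
  fixes V :: "'a set" and c :: "'a \<Rightarrow> 'a \<Rightarrow> nat" and k :: nat
  assumes "complete_edge_colored V c k" and "V \<noteq> {}"
  shows "(is_su_graph_rep V c \<longleftrightarrow>
            (\<not> has_rainbow_triangle V c \<and>
             (\<forall>i\<in>{1..k}. separable_perm_graph V (mono_edge c i)))) \<and>
         (is_su_graph_rep V c \<longrightarrow>
            (\<forall>W. W \<subseteq> V \<and> W \<noteq> {} \<longrightarrow>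
               (\<forall>i\<in>colors_on W c. separable_perm_graph W (mono_edge c i))))"
proof -
  have finV: "finite V" and col: "\<forall>x\<in>V. \<forall>y\<in>V. x \<noteq> y \<longrightarrow> c x y = c y x \<and> c x y \<in> {1..k}"
    and sur: "\<forall>i\<in>{1..k}. \<exists>x\<in>V. \<exists>y\<in>V. x \<noteq> y \<and> c x y = i"
    using assms(1) unfolding complete_edge_colored_def by auto
  have symc: "\<forall>x\<in>V. \<forall>y\<in>V. x \<noteq> y \<longrightarrow> c x y = c y x" using col by blast
  have sub: "separable_perm_graph W (mono_edge c i)" if su: "is_su_graph_rep V c" and W: "W \<subseteq> V" for W i
    using cograph_sep[OF finite_subset[OF W finV] mono_symon[OF symc W] p4free_mono[OF W su_p4free[OF su]]] .
  have nr: "\<not> has_rainbow_triangle V c" if su: "is_su_graph_rep V c"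
  proof
    assume "has_rainbow_triangle V c"
    then obtain x y z where r: "rainbow_triangle V c x y z" unfolding has_rainbow_triangle_def by blast
    obtain d m where sd: "symbolic_ultrametric V d m" and ag: "\<forall>x\<in>V. \<forall>y\<in>V. x \<noteq> y \<longrightarrow> d x y = c x y"
      using su unfolding is_su_graph_rep_def by blast
    have U2: "\<forall>x\<in>V. \<forall>y\<in>V. \<forall>z\<in>V. card {d x y, d x z, d y z} \<le> 2"
      using sd unfolding symbolic_ultrametric_def by auto
    have "x \<in> V" "y \<in> V" "z \<in> V" "x \<noteq> y" "x \<noteq> z" "y \<noteq> z" "c x y \<noteq> c x z" "c x y \<noteq> c y z" "c x z \<noteq> c y z"
      using r unfolding rainbow_triangle_def by auto
    then show False using card3_le2[OF U2[rule_format, of x y z]] ag by auto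
  qed
  have bk: "is_su_graph_rep V c" if nr: "\<not> has_rainbow_triangle V c"
    and sp: "\<forall>i\<in>{1..k}. separable_perm_graph V (mono_edge c i)"
  proof -
    define d where "d x y = (if x = y then 1 else c x y)" for x y
    define m where "m = max k 1"
    have pf: "p4free V (mono_edge c i)" if "i \<in> {1..k}" for i
      using sepgraph_p4free[OF mono_symon[OF symc order_refl]] sp that by blast
    have r1: "\<forall>x\<in>V. \<forall>y\<in>V. d x y \<in> {1..m}" using col unfolding d_def m_def by (force simp: le_max_iff_disj)
    have r2: "\<forall>i\<in>{1..m}. \<exists>x\<in>V. \<exists>y\<in>V. d x y = i"
    proof
      fix i assume i: "i \<in> {1..m}"
      show "\<exists>x\<in>V. \<exists>y\<in>V. d x y = i"
      proof (cases "k = 0")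
        case True
        then have "i = 1" using i unfolding m_def by auto
        then show ?thesis using assms(2) unfolding d_def by auto
      next
        case False
        then have "i \<in> {1..k}" using i unfolding m_def by auto
        then show ?thesis using sur unfolding d_def by fastforce
      qed
    qed
    have r3: "\<forall>x\<in>V. \<forall>y\<in>V. d x y = d y x" using symc unfolding d_def by auto
    have r4: "\<forall>x\<in>V. \<forall>y\<in>V. \<forall>z\<in>V. card {d x y, d x z, d y z} \<le> 2"
    proof (intro ballI)
      fix x y z assume V: "x \<in> V" "y \<in> V" "z \<in> V"
      show "card {d x y, d x z, d y z} \<le> 2"
      proof (cases "x = y \<or> x = z \<or> y = z")
        case True
        then have "d x y = d x z \<or> d x y = d y z \<or> d x z = d y z" using r3 V by auto
        then show ?thesis by (auto simp: card_insert_if)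
      next
        case False
        then have "\<not> rainbow_triangle V c x y z" using nr unfolding has_rainbow_triangle_def by blast
        then have "c x y = c x z \<or> c x y = c y z \<or> c x z = c y z" using V False unfolding rainbow_triangle_def by blast
        then have "d x y = d x z \<or> d x y = d y z \<or> d x z = d y z" using False unfolding d_def by auto
        then show ?thesis by (auto simp: card_insert_if)
      qed
    qed
    have r5: "\<not> (\<exists>x\<in>V. \<exists>y\<in>V. \<exists>u\<in>V. \<exists>v\<in>V. card {x, y, u, v} = 4 \<and>
          d x y = d y u \<and> d y u = d u v \<and> d u v \<noteq> d v y \<and> d v y = d x v \<and> d x v = d x u)"
    proof
      assume "\<exists>x\<in>V. \<exists>y\<in>V. \<exists>u\<in>V. \<exists>v\<in>V. card {x, y, u, v} = 4 \<and>
          d x y = d y u \<and> d y u = d u v \<and> d u v \<noteq> d v y \<and> d v y = d x v \<and> d x v = d x u"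
      then obtain x y u v where V: "x \<in> V" "y \<in> V" "u \<in> V" "v \<in> V" and c4: "card {x, y, u, v} = 4"
        and h: "d x y = d y u" "d y u = d u v" "d u v \<noteq> d v y" "d v y = d x v" "d x v = d x u" by blast
      have ds: "x \<noteq> y" "x \<noteq> u" "x \<noteq> v" "y \<noteq> u" "y \<noteq> v" "u \<noteq> v" using card4_distinct[OF c4] by auto
      define i where "i = c x y"
      have i: "i \<in> {1..k}" using col V ds unfolding i_def by auto
      have e: "c x y = i" "c y u = i" "c u v = i" "c x u \<noteq> i" "c y v \<noteq> i" "c x v \<noteq> i"
        using h ds symc V unfolding d_def i_def by auto
      have "\<not> p4free V (mono_edge c i)" unfolding p4free_def not_not
        by (rule bexI[of _ x], rule bexI[of _ y], rule bexI[of _ u], rule bexI[of _ v]) (use V ds e in \<open>auto simp: mono_edge_def\<close>)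
      then show False using pf[OF i] by simp
    qed
    have "symbolic_ultrametric V d m" unfolding symbolic_ultrametric_def
      using finV assms(2) r1 r2 r3 r4 r5 by blast
    moreover have "\<forall>x\<in>V. \<forall>y\<in>V. x \<noteq> y \<longrightarrow> d x y = c x y" unfolding d_def by simp
    ultimately show ?thesis unfolding is_su_graph_rep_def by blast
  qed
  show ?thesis using sub nr bk by blast
qed

end
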